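(* Let $x>3$ be an integer and let $\varepsilon:=s^-(3)$. Then $$\varepsilon+\log(2)\Big(\frac13+\frac14+\cdots+\frac1{x-1}\Big)\;\le\;s^-(x)\;\le\;\log(x-1).$$
   Context: A square is a nonempty word of the form $uu$; a word is square-free if no contiguous subword of it is a square. $\omega_n^-(x)$ is the number of square-free words of length $n$ over an $x$-letter alphabet and $s^-(x)=\lim_{n\to\infty}\frac1n\log\omega_n^-(x)$ (this limit exists). *)

theory Defs
  imports Complex_Main
begin

definition square_free :: "'a list \<Rightarrow> bool" where
  "square_free w \<longleftrightarrow> \<not> (\<exists>p u s. u \<noteq> [] \<and> w = p @ u @ u @ s)"

definition omega_sf :: "nat \<Rightarrow> nat \<Rightarrow> nat" where
  "omega_sf n x = card {w :: nat list. length w = n \<and> set w \<subseteq> {0..<x} \<and> square_free w}"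

definition s_sf :: "nat \<Rightarrow> real" where
  "s_sf x = lim (\<lambda>n. ln (real (omega_sf n x)) / real n)"

end

theory Submission
  imports Defs
begin

lemma fekete_iter:
  fixes a :: "nat \<Rightarrow> real"
  assumes sub: "\<And>m n. a (m+n) \<le> a m + a n"
  shows "a (q*m + r) \<le> real q * a m + a r"
proof (induction q)
  case 0 then show ?case by simp
next
  case (Suc q)
  have "a (Suc q * m + r) = a (m + (q*m + r))" by (simp add: add.assoc)
  also have "\<dots> \<le> a m + a (q*m+r)" by (rule sub)
  also have "\<dots> \<le> a m + (real q * a m + a r)" using Suc by simp
  finally show ?case by (simp add: algebra_simps)
qed

lemma fekete:
  fixes a :: "nat \<Rightarrow> real"
  assumes nn: "\<And>n. a n \<ge> 0" and sub: "\<And>m n. a (m+n) \<le> a m + a n"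
  shows "convergent (\<lambda>n. a n / real n)"
proof -
  define S where "S = (\<lambda>n. a n / real n) ` {1..}"
  define L where "L = Inf S"
  have Sne: "S \<noteq> {}" unfolding S_def by auto
  have bdd: "bdd_below S" unfolding S_def bdd_below_def using nn by (auto intro!: exI[of _ 0])
  have Lle: "L \<le> a n / real n" if "n \<ge> 1" for n
    unfolding L_def by (rule cInf_lower[OF _ bdd]) (use that in \<open>auto simp: S_def\<close>)
  have "(\<lambda>n. a n / real n) \<longlonglongrightarrow> L"
    unfolding LIMSEQ_iff
  proof (intro allI impI)
    fix e :: real assume e: "e > 0"
    have "Inf S < L + e/2" using e L_def by simp
    then obtain y where "y \<in> S" "y < L + e/2"
      using cInf_less_iff[OF Sne bdd] by blast
    then obtain m where m: "m \<ge> 1" "a m / real m < L + e/2" unfolding S_def by auto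
    define C where "C = (\<Sum>r<m. a r)"
    have C0: "C \<ge> 0" unfolding C_def using nn by (simp add: sum_nonneg)
    define N where "N = nat \<lceil>2*C/e\<rceil> + 1"
    show "\<exists>no. \<forall>n\<ge>no. norm (a n / real n - L) < e"
    proof (intro exI allI impI)
      fix n assume nN: "n \<ge> N"
      have n1: "n \<ge> 1" using nN N_def by simp
      define q where "q = n div m"
      define r where "r = n mod m"
      have nqr: "n = q*m + r" unfolding q_def r_def by simp
      have rm: "r < m" unfolding r_def using m by simp
      have arC: "a r \<le> C" unfolding C_def
        by (rule member_le_sum) (use rm nn in auto)
      have an: "a n \<le> real q * a m + C"
        using fekete_iter[of a q m r, OF sub] nqr arC by simp
      have qm: "real q * real m \<le> real n" using nqr by (simp flip: of_nat_mult)
      have "real q * a m * real m \<le> a m * real n"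
        using mult_left_mono[OF qm nn[of m]] by (simp add: algebra_simps)
      hence t1: "real q * a m / real n \<le> a m / real m"
        using m n1 by (simp add: field_simps)
      have "2*C/e < real n" using nN N_def by linarith
      hence t2: "C / real n < e/2" using e n1 by (simp add: field_simps)
      have "a n / real n \<le> real q * a m / real n + C / real n"
        using an n1 by (simp add: field_simps)
      hence "a n / real n < L + e" using t1 t2 m by linarith
      moreover have "L \<le> a n / real n" using Lle n1 by simp
      ultimately show "norm (a n / real n - L) < e" by simp
    qed
  qed
  then show ?thesis unfolding convergent_def by blast
qed

lemma sf_append: "square_free (u @ v) \<Longrightarrow> square_free u \<and> square_free v"
  unfolding square_free_def
proof (intro conjI notI)
  assume h: "\<not> (\<exists>p w s. w \<noteq> [] \<and> u @ v = p @ w @ w @ s)"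
  { assume "\<exists>p w s. w \<noteq> [] \<and> u = p @ w @ w @ s"
    then obtain p w s where "w \<noteq> []" "u = p @ w @ w @ s" by blast
    hence "w \<noteq> [] \<and> u @ v = p @ w @ w @ (s @ v)" by simp
    with h show False by blast }
  { assume "\<exists>p w s. w \<noteq> [] \<and> v = p @ w @ w @ s"
    then obtain p w s where "w \<noteq> []" "v = p @ w @ w @ s" by blast
    hence "w \<noteq> [] \<and> u @ v = (u @ p) @ w @ w @ s" by simp
    with h show False by blast }
qed

lemma sf_map: "square_free (map f v) \<Longrightarrow> square_free v"
  unfolding square_free_def
proof (rule notI)
  assume h: "\<not> (\<exists>p w s. w \<noteq> [] \<and> map f v = p @ w @ w @ s)"
    and "\<exists>p u s. u \<noteq> [] \<and> v = p @ u @ u @ s"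
  then obtain p u s where "u \<noteq> []" "v = p @ u @ u @ s" by blast
  hence "map f u \<noteq> [] \<and> map f v = map f p @ map f u @ map f u @ map f s" by simp
  with h show False by blast
qed

lemma sf_Nil: "square_free []"
  unfolding square_free_def by auto

definition SF :: "nat \<Rightarrow> nat \<Rightarrow> nat list set" where
  "SF n k = {w. length w = n \<and> set w \<subseteq> {0..<k} \<and> square_free w}"

lemma omega_SF: "omega_sf n k = card (SF n k)"
  unfolding omega_sf_def SF_def ..

lemma finite_SF: "finite (SF n k)"
proof -
  have "SF n k \<subseteq> {xs. set xs \<subseteq> {0..<k} \<and> length xs = n}" unfolding SF_def by auto
  thus ?thesis using finite_lists_length_eq[of "{0..<k}" n] finite_subset by blast
qed

lemma omega_submult: "omega_sf (m+n) k \<le> omega_sf m k * omega_sf n k"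
proof -
  have "SF (m+n) k \<subseteq> (\<lambda>(u,v). u @ v) ` (SF m k \<times> SF n k)"
  proof
    fix w assume w: "w \<in> SF (m+n) k"
    have "w = take m w @ drop m w" by simp
    have sf: "square_free (take m w) \<and> square_free (drop m w)"
      using w sf_append[of "take m w" "drop m w"] unfolding SF_def by simp
    have "take m w \<in> SF m k" "drop m w \<in> SF n k"
      using w sf unfolding SF_def by (auto dest: in_set_takeD in_set_dropD)
    thus "w \<in> (\<lambda>(u,v). u @ v) ` (SF m k \<times> SF n k)"
      by (intro image_eqI[of _ _ "(take m w, drop m w)"]) auto
  qed
  hence "card (SF (m+n) k) \<le> card ((\<lambda>(u,v). u @ v) ` (SF m k \<times> SF n k))"
    by (intro card_mono finite_imageI) (auto simp: finite_SF)
  also have "\<dots> \<le> card (SF m k \<times> SF n k)" by (rule card_image_le) (simp add: finite_SF)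
  finally show ?thesis by (simp add: omega_SF card_cartesian_product)
qed

lemma SF_mono: "k \<le> k' \<Longrightarrow> SF n k \<subseteq> SF n k'"
  unfolding SF_def by auto

lemma omega_mono: "k \<le> k' \<Longrightarrow> omega_sf n k \<le> omega_sf n k'"
  unfolding omega_SF by (intro card_mono finite_SF SF_mono)

fun tm :: "nat \<Rightarrow> bool" where
  "tm n = (if n = 0 then False else if even n then tm (n div 2) else \<not> tm (n div 2))"

declare tm.simps[simp del]

lemma tm_0: "tm 0 = False"
  by (subst tm.simps) auto

lemma tm_even: "tm (2*m) = tm m"
  by (cases "m = 0") (simp add: tm_0, subst tm.simps, auto)

lemma tm_odd: "tm (2*m+1) = (\<not> tm m)"
  by (subst tm.simps) auto

lemma tm_three: "\<not> (tm j = tm (j+1) \<and> tm (j+1) = tm (j+2))"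
proof (cases "even j")
  case True
  then obtain m where "j = 2*m" by blast
  thus ?thesis using tm_even[of m] tm_odd[of m] by auto
next
  case False
  then obtain m where "j = 2*m+1" using oddE by blast
  hence "j+1 = 2*(m+1)" "j+2 = 2*(m+1)+1" by auto
  thus ?thesis using tm_even[of "m+1"] tm_odd[of "m+1"] by metis
qed

lemma tm_overlap_free:
  "p \<ge> 1 \<Longrightarrow> \<not> (\<forall>j. i \<le> j \<and> j \<le> i+p \<longrightarrow> tm (j+p) = tm j)"
proof (induction p arbitrary: i rule: less_induct)
  case (less p)
  show ?case
  proof
    assume ov: "\<forall>j. i \<le> j \<and> j \<le> i+p \<longrightarrow> tm (j+p) = tm j"
    show False
    proof (cases "even p")
      case True
      then obtain q where pq: "p = 2*q" by blast
      have q1: "q \<ge> 1" "q < p" using less.prems pq by auto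
      have "\<forall>m. i div 2 \<le> m \<and> m \<le> i div 2 + q \<longrightarrow> tm (m+q) = tm m"
      proof (intro allI impI)
        fix m assume mr: "i div 2 \<le> m \<and> m \<le> i div 2 + q"
        show "tm (m+q) = tm m"
        proof (cases "2*m \<ge> i")
          case True
          hence "tm (2*m + p) = tm (2*m)" using ov mr pq by auto
          thus ?thesis using tm_even[of m] tm_even[of "m+q"] pq
            by (simp add: algebra_simps)
        next
          case False
          hence "2*m+1 = i" using mr by linarith
          hence "tm (2*m+1 + p) = tm (2*m+1)" using ov by auto
          moreover have "2*m+1+p = 2*(m+q)+1" using pq by simp
          ultimately show ?thesis using tm_odd[of m] tm_odd[of "m+q"] by simp
        qed
      qed
      thus False using less.IH[OF q1(2) q1(1)] by blast
    next
      case False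
      show False
      proof (cases "p = 1")
        case True
        thus False using ov tm_three[of i] by (auto simp: numeral_2_eq_2)
      next
        case p3: False
        hence p3: "p \<ge> 3" using False less.prems by presburger
        have alt: "tm j \<noteq> tm (j+1)" if "odd j" "i \<le> j" "j+1 \<le> i + 2*p" for j
        proof (cases "j+1 \<le> i+p")
          case True
          have "even (j+p)" using that(1) False by simp
          then obtain m where "j+p = 2*m" by blast
          hence "tm (j+p) \<noteq> tm (j+p+1)" using tm_even[of m] tm_odd[of m] by simp
          moreover have "tm (j+p) = tm j" "tm (j+1+p) = tm (j+1)" using ov[rule_format, of j] ov[rule_format, of "j+1"] True that by auto
          ultimately show ?thesis by simp
        next
          case F: False
          have "even (j-p)" using that(1) False F by (simp add: even_diff_nat)
          then obtain m where m: "j-p = 2*m" by blast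
          hence "tm (j-p) \<noteq> tm (j-p+1)" using tm_even[of m] tm_odd[of m] by simp
          moreover have r1: "i \<le> j-p" "j-p \<le> i+p" "i \<le> j-p+1" "j-p+1 \<le> i+p"
            using F that by auto
          have "tm (j-p+p) = tm (j-p)" "tm (j-p+1+p) = tm (j-p+1)"
            using ov[rule_format, of "j-p"] ov[rule_format, of "j-p+1"] r1 by auto
          moreover
          moreover have "j-p+p = j" "j-p+1+p = j+1" using F by auto
          ultimately show ?thesis by simp
        qed
        obtain k where k: "even k" "i \<le> k" "k \<le> i+1"
        proof (cases "even i")
          case True thus ?thesis using that[of i] by simp
        next
          case False thus ?thesis using that[of "i+1"] by simp
        qed
        then obtain m where km: "k = 2*m" by blast
        have a1: "tm (k+1) \<noteq> tm (k+2)" using alt[of "k+1"] k p3 by auto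
        have a2: "tm (k+3) \<noteq> tm (k+4)" using alt[of "k+3"] k p3 by (simp add: add.assoc add.commute)
        have b1: "tm k \<noteq> tm (k+1)" using km tm_even[of m] tm_odd[of m] by simp
        have e2: "k+2 = 2*(m+1)" and e3: "k+3 = 2*(m+1)+1" using km by auto
        have b2: "tm (k+2) \<noteq> tm (k+3)" unfolding e2 e3 tm_even tm_odd by simp
        have "tm k = tm (k+2)" "tm (k+2) = tm (k+4)" using a1 a2 b1 b2 by auto
        moreover have e4: "k+4 = 2*(m+2)" using km by auto
        have "tm (k+2) = tm (m+1)" unfolding e2 tm_even ..
        moreover have "tm (k+4) = tm (m+2)" unfolding e4 tm_even ..
        moreover have "tm k = tm m" unfolding km tm_even ..
        moreover
        ultimately show False using tm_three[of m] by simp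
      qed
    qed
  qed
qed

definition cw :: "nat \<Rightarrow> nat" where
  "cw j = (if tm j = tm (j+1) then 1 else if tm j then 0 else 2)"

lemma cw_sq_free:
  assumes l: "l \<ge> 1" and eq: "\<And>j. j < l \<Longrightarrow> cw (i+j) = cw (i+l+j)"
  shows False
proof -
  have eqj: "cw j = cw (j+l)" if "i \<le> j" "j < i+l" for j
  proof -
    have "i + (j-i) = j" "i+l+(j-i) = j+l" using that by auto
    thus ?thesis using eq[of "j-i"] that by (simp add: add.commute)
  qed
  have stepP: "(tm (j+l) = tm j) = (tm (j+1+l) = tm (j+1))" if "i \<le> j" "j < i+l" for j
    using eqj[OF that] unfolding cw_def
    by (simp add: add.commute add.left_commute split: if_splits)
  have Pconst: "(tm (j+l) = tm j) = (tm (i+l) = tm i)" if "i \<le> j" "j \<le> i+l" for j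
    using that
  proof (induction j rule: dec_induct)
    case base then show ?case by simp
  next
    case (step j)
    have j: "j \<le> i+l" "j < i+l" using step by auto
    have A: "(tm (j+l) = tm j) = (tm (i+l) = tm i)" using step.IH j by blast
    have B: "(tm (j+l) = tm j) = (tm (j+1+l) = tm (j+1))" using stepP[of j] step(1) j by blast
    show ?case using A B by simp
  qed
  show False
  proof (cases "tm (i+l) = tm i")
    case True
    have "\<forall>j. i \<le> j \<and> j \<le> i+l \<longrightarrow> tm (j+l) = tm j" using Pconst True by blast
    thus False using tm_overlap_free[OF l] by blast
  next
    case False
    have same: "tm j = tm (j+1)" if "i \<le> j" "j < i+l" for j
    proof (rule ccontr)
      assume ne: "tm j \<noteq> tm (j+1)"
      have "tm (j+l) \<noteq> tm j" using Pconst[of j] that False by simp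
      thus False using eqj[OF that] ne unfolding cw_def
        by (simp add: add.commute add.left_commute split: if_splits)
    qed
    have "tm j = tm i" if "i \<le> j" "j \<le> i+l" for j
      using that
    proof (induction j rule: dec_induct)
      case base then show ?case by simp
    next
      case (step j)
      have j: "j \<le> i+l" "j < i+l" using step by auto
      have A: "tm j = tm i" using step.IH j by blast
      have B: "tm j = tm (j+1)" using same[of j] step(1) j by blast
      show ?case using A B by simp
    qed
    from this[of "i+l"] show False using False by simp
  qed
qed

lemma cw_word_sf: "square_free (map cw [0..<n])"
  unfolding square_free_def
proof
  assume "\<exists>p u s. u \<noteq> [] \<and> map cw [0..<n] = p @ u @ u @ s"
  then obtain p u s where u: "u \<noteq> []" and w: "map cw [0..<n] = p @ u @ u @ s" by blast
  define i where "i = length p"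
  define l where "l = length u"
  have len: "i + 2*l \<le> n" using arg_cong[OF w, of length] unfolding i_def l_def by simp
  have "cw (i+j) = cw (i+l+j)" if "j < l" for j
  proof -
    have "map cw [0..<n] ! (i+j) = u ! j" unfolding w i_def using that l_def
      by (simp add: nth_append)
    moreover have "map cw [0..<n] ! (i+l+j) = u ! j" unfolding w i_def using that l_def
      by (simp add: nth_append)
    moreover have "map cw [0..<n] ! (i+j) = cw (i+j)" "map cw [0..<n] ! (i+l+j) = cw (i+l+j)"
      using len that by auto
    ultimately show ?thesis by simp
  qed
  moreover have "l \<ge> 1" using u l_def by (cases u) auto
  ultimately show False using cw_sq_free by blast
qed

lemma omega3_pos: "omega_sf n 3 \<ge> 1"
proof -
  have "map cw [0..<n] \<in> SF n 3"
    unfolding SF_def using cw_word_sf by (auto simp: cw_def)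
  hence "SF n 3 \<noteq> {}" by blast
  thus ?thesis unfolding omega_SF using finite_SF
    by (metis card_0_eq less_one not_le)
qed

lemma omega_pos: "k \<ge> 3 \<Longrightarrow> omega_sf n k \<ge> 1"
  using omega3_pos[of n] omega_mono[of 3 k n] by simp

definition Ea :: "nat \<Rightarrow> nat list \<Rightarrow> nat set" where
  "Ea a w = {i. i < length w \<and> w ! i = a}"

definition emb :: "nat \<Rightarrow> nat list \<Rightarrow> nat set \<Rightarrow> nat list" where
  "emb k w S = map (\<lambda>i. if i \<in> S then k else w ! i) [0..<length w]"

lemma emb_back:
  assumes "set w \<subseteq> {0..<k}" "S \<subseteq> Ea a w"
  shows "map (\<lambda>y. if y = k then a else y) (emb k w S) = w"
proof (rule nth_equalityI)
  show "length (map (\<lambda>y. if y = k then a else y) (emb k w S)) = length w"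
    by (simp add: emb_def)
  fix i assume "i < length (map (\<lambda>y. if y = k then a else y) (emb k w S))"
  hence i: "i < length w" by (simp add: emb_def)
  have "w ! i < k" using assms(1) i nth_mem by fastforce
  thus "map (\<lambda>y. if y = k then a else y) (emb k w S) ! i = w ! i"
    using i assms(2) by (auto simp: emb_def Ea_def)
qed

lemma emb_in:
  assumes w: "w \<in> SF n k" and S: "S \<subseteq> Ea a w"
  shows "emb k w S \<in> SF n (Suc k)"
proof -
  have sw: "set w \<subseteq> {0..<k}" and sf: "square_free w" and lw: "length w = n"
    using w unfolding SF_def by auto
  have "square_free (emb k w S)"
    using sf_map[of "\<lambda>y. if y = k then a else y" "emb k w S"] emb_back[OF sw S] sf by simp
  moreover have "set (emb k w S) \<subseteq> {0..<Suc k}"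
    using sw by (auto simp: emb_def dest!: nth_mem[THEN subsetD[OF sw]])
  ultimately show ?thesis using lw unfolding SF_def by (simp add: emb_def)
qed

lemma emb_inj:
  assumes "w \<in> SF n k" "S \<subseteq> Ea a w" "w' \<in> SF n k" "S' \<subseteq> Ea a w'"
    and e: "emb k w S = emb k w' S'"
  shows "w = w' \<and> S = S'"
proof -
  have sw: "set w \<subseteq> {0..<k}" "set w' \<subseteq> {0..<k}" using assms unfolding SF_def by auto
  have ww: "w = w'" using emb_back[OF sw(1) assms(2)] emb_back[OF sw(2) assms(4)] e by metis
  have "S = {i. i < length w \<and> emb k w S ! i = k}"
  proof -
    have "i \<in> S \<longleftrightarrow> i < length w \<and> emb k w S ! i = k" for i
    proof -
      have en: "emb k w S ! i = (if i \<in> S then k else w ! i)" if "i < length w"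
        using that by (simp add: emb_def)
      { assume "i < length w" hence "w ! i < k" using sw(1) nth_mem by fastforce }
      thus ?thesis using assms(2) en by (cases "i \<in> S") (auto simp: Ea_def)
    qed
    thus ?thesis by blast
  qed
  moreover have "S' = {i. i < length w' \<and> emb k w' S' ! i = k}"
  proof -
    have "i \<in> S' \<longleftrightarrow> i < length w' \<and> emb k w' S' ! i = k" for i
    proof -
      have en: "emb k w' S' ! i = (if i \<in> S' then k else w' ! i)" if "i < length w'"
        using that by (simp add: emb_def)
      { assume "i < length w'" hence "w' ! i < k" using sw(2) nth_mem by fastforce }
      thus ?thesis using assms(4) en by (cases "i \<in> S'") (auto simp: Ea_def)
    qed
    thus ?thesis by blast
  qed
  ultimately show ?thesis using ww e by simp
qed

lemma finite_Ea: "finite (Ea a w)" unfolding Ea_def by simp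

lemma sum_pow_le:
  assumes a: "a < k"
  shows "(\<Sum>w\<in>SF n k. 2 ^ card (Ea a w)) \<le> omega_sf n (Suc k)"
proof -
  define T where "T = (SIGMA w:SF n k. Pow (Ea a w))"
  have "card T = (\<Sum>w\<in>SF n k. card (Pow (Ea a w)))"
    unfolding T_def by (rule card_SigmaI) (auto simp: finite_SF finite_Ea)
  also have "\<dots> = (\<Sum>w\<in>SF n k. 2 ^ card (Ea a w))" by (simp add: card_Pow finite_Ea)
  finally have cT: "card T = (\<Sum>w\<in>SF n k. 2 ^ card (Ea a w))" .
  have inj: "inj_on (\<lambda>(w,S). emb k w S) T"
  proof (rule inj_onI)
    fix p q assume "p \<in> T" "q \<in> T" "(\<lambda>(w,S). emb k w S) p = (\<lambda>(w,S). emb k w S) q"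
    thus "p = q" unfolding T_def using emb_inj[of "fst p" n k "snd p" a "fst q" "snd q"]
      by (cases p, cases q) auto
  qed
  have sub: "(\<lambda>(w,S). emb k w S) ` T \<subseteq> SF n (Suc k)"
  proof
    fix v assume "v \<in> (\<lambda>(w,S). emb k w S) ` T"
    then obtain w S where "w \<in> SF n k" "S \<subseteq> Ea a w" "v = emb k w S" unfolding T_def by auto
    thus "v \<in> SF n (Suc k)" using emb_in by blast
  qed
  have "card T = card ((\<lambda>(w,S). emb k w S) ` T)" using card_image[OF inj] by simp
  also have "\<dots> \<le> card (SF n (Suc k))" by (rule card_mono[OF finite_SF sub])
  finally show ?thesis using cT by (simp add: omega_SF)
qed

lemma exists_frequent:
  assumes k: "k \<ge> 1" and w: "w \<in> SF n k"
  shows "\<exists>a<k. n \<le> k * card (Ea a w)"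
proof (rule ccontr)
  assume "\<not> ?thesis"
  hence lt: "\<And>a. a < k \<Longrightarrow> k * card (Ea a w) < n" by auto
  have lw: "length w = n" and sw: "set w \<subseteq> {0..<k}" using w unfolding SF_def by auto
  have "{0..<n} \<subseteq> (\<Union>a\<in>{..<k}. Ea a w)"
  proof
    fix i assume "i \<in> {0..<n}"
    hence "i < length w" using lw by simp
    moreover hence "w ! i < k" using sw nth_mem by fastforce
    ultimately show "i \<in> (\<Union>a\<in>{..<k}. Ea a w)" unfolding Ea_def by auto
  qed
  hence "n \<le> card (\<Union>a\<in>{..<k}. Ea a w)"
    using card_mono[of "\<Union>a\<in>{..<k}. Ea a w" "{0..<n}"] by (simp add: finite_Ea)
  also have "\<dots> \<le> (\<Sum>a<k. card (Ea a w))" by (rule card_UN_le) simp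
  finally have "k * n \<le> k * (\<Sum>a<k. card (Ea a w))" by simp
  also have "\<dots> = (\<Sum>a<k. k * card (Ea a w))" by (simp add: sum_distrib_left)
  also have "\<dots> < (\<Sum>a<k. n)"
  proof (rule sum_strict_mono)
    show "finite {..<k}" by simp
    have "0 \<in> {..<k}" using k by simp
    thus "{..<k} \<noteq> {}" by blast
    fix a assume "a \<in> {..<k}" thus "k * card (Ea a w) < n" using lt by simp
  qed
  also have "\<dots> = k * n" by simp
  finally show False by simp
qed

lemma relabel:
  assumes k: "k \<ge> 1"
  shows "real (omega_sf n k) * 2 powr (real n / real k) \<le> real k * real (omega_sf n (Suc k))"
proof -
  have each: "2 powr (real n / real k) \<le> (\<Sum>a<k. 2 ^ card (Ea a w))" if w: "w \<in> SF n k" for w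
  proof -
    obtain a where a: "a < k" "n \<le> k * card (Ea a w)" using exists_frequent[OF k w] by blast
    have "real n / real k \<le> real (card (Ea a w))"
      using a(2) k by (simp add: field_simps flip: of_nat_mult)
    hence "2 powr (real n / real k) \<le> 2 powr real (card (Ea a w))" by simp
    also have "\<dots> = 2 ^ card (Ea a w)" by (simp add: powr_realpow)
    also have "\<dots> \<le> (\<Sum>a<k. 2 ^ card (Ea a w))"
      by (rule member_le_sum) (use a in auto)
    finally show ?thesis .
  qed
  have "real (omega_sf n k) * 2 powr (real n / real k) = (\<Sum>w\<in>SF n k. 2 powr (real n / real k))"
    by (simp add: omega_SF)
  also have "\<dots> \<le> (\<Sum>w\<in>SF n k. \<Sum>a<k. (2::real) ^ card (Ea a w))"
    by (rule sum_mono) (use each in auto)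
  also have "\<dots> = (\<Sum>a<k. \<Sum>w\<in>SF n k. (2::real) ^ card (Ea a w))" by (rule sum.swap)
  also have "\<dots> \<le> (\<Sum>a<k. real (omega_sf n (Suc k)))"
  proof (rule sum_mono)
    fix a assume "a \<in> {..<k}"
    hence "(\<Sum>w\<in>SF n k. 2 ^ card (Ea a w)) \<le> omega_sf n (Suc k)" using sum_pow_le by simp
    hence "real (\<Sum>w\<in>SF n k. 2 ^ card (Ea a w)) \<le> real (omega_sf n (Suc k))" by linarith
    thus "(\<Sum>w\<in>SF n k. (2::real) ^ card (Ea a w)) \<le> real (omega_sf n (Suc k))" by simp
  qed
  also have "\<dots> = real k * real (omega_sf n (Suc k))" by simp
  finally show ?thesis .
qed

lemma upper_step:
  assumes n: "n \<ge> 1" and x: "x \<ge> 1"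
  shows "omega_sf (Suc n) x \<le> (x - 1) * omega_sf n x"
proof -
  define F where "F u = (\<lambda>c. u @ [c]) ` ({0..<x} - {last u})" for u
  have sub: "SF (Suc n) x \<subseteq> (\<Union>u\<in>SF n x. F u)"
  proof
    fix w assume w: "w \<in> SF (Suc n) x"
    have lw: "length w = Suc n" and sw: "set w \<subseteq> {0..<x}" and sf: "square_free w"
      using w unfolding SF_def by auto
    define u where "u = butlast w"
    define c where "c = last w"
    have wuc: "w = u @ [c]" unfolding u_def c_def using lw
      by (metis append_butlast_last_id length_0_conv nat.simps(3))
    have u1: "u \<noteq> []" using lw n unfolding u_def by (cases w rule: rev_cases) auto
    have usf: "square_free u" using sf wuc sf_append by metis
    have uSF: "u \<in> SF n x" using usf lw sw unfolding SF_def u_def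
      by (auto dest: in_set_butlastD)
    have cx: "c < x" using sw wuc by auto
    have "c \<noteq> last u"
    proof
      assume "c = last u"
      hence "w = butlast u @ [c] @ [c] @ []" using wuc u1 by (metis append.assoc append_Nil2 append_butlast_last_id)
      thus False using sf unfolding square_free_def by blast
    qed
    hence "w \<in> F u" unfolding F_def using wuc cx by auto
    thus "w \<in> (\<Union>u\<in>SF n x. F u)" using uSF by blast
  qed
  have "card (SF (Suc n) x) \<le> card (\<Union>u\<in>SF n x. F u)"
    by (rule card_mono[OF _ sub]) (auto simp: F_def finite_SF)
  also have "\<dots> \<le> (\<Sum>u\<in>SF n x. card (F u))" by (rule card_UN_le[OF finite_SF])
  also have "\<dots> \<le> (\<Sum>u\<in>SF n x. x - 1)"
  proof (rule sum_mono)
    fix u assume u: "u \<in> SF n x"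
    have "card (F u) \<le> card ({0..<x} - {last u})" unfolding F_def by (rule card_image_le) simp
    also have "\<dots> \<le> x - 1"
    proof -
      have "u \<noteq> []" using u n unfolding SF_def by auto
      hence "last u \<in> set u" by simp
      hence "last u \<in> {0..<x}" using u unfolding SF_def by auto
      thus ?thesis by (simp add: card_Diff_singleton)
    qed
    finally show "card (F u) \<le> x - 1" .
  qed
  also have "\<dots> = (x - 1) * card (SF n x)" by simp
  finally show ?thesis by (simp only: omega_SF)
qed

lemma s_conv:
  assumes k: "k \<ge> 3"
  shows "(\<lambda>n. ln (real (omega_sf n k)) / real n) \<longlonglongrightarrow> s_sf k"
proof -
  have pos: "real (omega_sf n k) \<ge> 1" for n using omega_pos[OF k, of n] by simp
  have "convergent (\<lambda>n. ln (real (omega_sf n k)) / real n)"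
  proof (rule fekete)
    fix n show "ln (real (omega_sf n k)) \<ge> 0" using pos[of n] by simp
  next
    fix m n
    have "real (omega_sf (m+n) k) \<le> real (omega_sf m k) * real (omega_sf n k)"
      using omega_submult[of m n k] by (simp flip: of_nat_mult)
    hence "ln (real (omega_sf (m+n) k)) \<le> ln (real (omega_sf m k) * real (omega_sf n k))"
      using pos[of "m+n"] by simp
    also have "\<dots> = ln (real (omega_sf m k)) + ln (real (omega_sf n k))"
      using pos[of m] pos[of n] by (simp add: ln_mult)
    finally show "ln (real (omega_sf (m+n) k)) \<le> ln (real (omega_sf m k)) + ln (real (omega_sf n k))" .
  qed
  thus ?thesis unfolding s_sf_def convergent_LIMSEQ_iff .
qed

lemma s_step:
  assumes k: "k \<ge> 3"
  shows "s_sf k + ln 2 / real k \<le> s_sf (Suc k)"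
proof -
  have k1: "Suc k \<ge> 3" using k by simp
  have pos: "real (omega_sf n k) \<ge> 1" for n using omega_pos[OF k, of n] by simp
  have pos1: "real (omega_sf n (Suc k)) \<ge> 1" for n using omega_pos[OF k1, of n] by simp
  have L: "(\<lambda>n. ln (real (omega_sf n k)) / real n + ln 2 / real k) \<longlonglongrightarrow> s_sf k + ln 2 / real k"
    by (intro tendsto_intros s_conv[OF k])
  have R: "(\<lambda>n. ln (real k) / real n + ln (real (omega_sf n (Suc k))) / real n) \<longlonglongrightarrow> 0 + s_sf (Suc k)"
    by (intro tendsto_intros s_conv[OF k1])
  have ineq: "ln (real (omega_sf n k)) / real n + ln 2 / real k
      \<le> ln (real k) / real n + ln (real (omega_sf n (Suc k))) / real n" if n: "n \<ge> 1" for n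
  proof -
    have "real (omega_sf n k) * 2 powr (real n / real k) \<le> real k * real (omega_sf n (Suc k))"
      using relabel[of k n] k by simp
    hence "ln (real (omega_sf n k) * 2 powr (real n / real k)) \<le> ln (real k * real (omega_sf n (Suc k)))"
      using pos[of n] pos1[of n] k by (subst ln_le_cancel_iff) auto
    hence "ln (real (omega_sf n k)) + real n / real k * ln 2 \<le> ln (real k) + ln (real (omega_sf n (Suc k)))"
      using pos[of n] pos1[of n] k by (simp add: ln_mult ln_powr)
    hence "(ln (real (omega_sf n k)) + real n / real k * ln 2) / real n \<le> (ln (real k) + ln (real (omega_sf n (Suc k)))) / real n"
      using n by (intro divide_right_mono) auto
    thus ?thesis using n by (simp add: add_divide_distrib)
  qed
  have "s_sf k + ln 2 / real k \<le> 0 + s_sf (Suc k)"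
    by (rule LIMSEQ_le[OF L R]) (use ineq in auto)
  thus ?thesis by simp
qed

lemma s_lower: "s_sf 3 + ln 2 * (\<Sum>k=3..<3+m. 1 / real k) \<le> s_sf (3+m)"
proof (induction m)
  case 0 thus ?case by simp
next
  case (Suc m)
  have e: "3 + Suc m = Suc (3+m)" by simp
  have "(\<Sum>k=3..<3+Suc m. 1 / real k) = (\<Sum>k=3..<3+m. 1 / real k) + 1 / real (3+m)"
    unfolding e by (rule sum.atLeastLessThan_Suc) simp
  hence "s_sf 3 + ln 2 * (\<Sum>k=3..<3+Suc m. 1 / real k)
      = s_sf 3 + ln 2 * (\<Sum>k=3..<3+m. 1 / real k) + ln 2 / real (3+m)"
    by (simp add: algebra_simps)
  also have "\<dots> \<le> s_sf (3+m) + ln 2 / real (3+m)" using Suc by simp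
  also have "\<dots> \<le> s_sf (Suc (3+m))" by (rule s_step) simp
  finally show ?case by simp
qed

lemma omega_upper:
  assumes x: "x \<ge> 1" and n: "n \<ge> 1"
  shows "omega_sf n x \<le> x * (x-1)^(n-1)"
  using n
proof (induction n rule: dec_induct)
  case base
  have "SF 1 x \<subseteq> {xs. set xs \<subseteq> {0..<x} \<and> length xs = 1}" unfolding SF_def by auto
  hence "card (SF 1 x) \<le> card {xs. set xs \<subseteq> {0..<x} \<and> length xs = 1}"
    by (intro card_mono finite_lists_length_eq) auto
  thus ?case by (simp add: omega_SF card_lists_length_eq)
next
  case (step n)
  have "omega_sf (Suc n) x \<le> (x-1) * omega_sf n x" by (rule upper_step) (use step x in auto)
  also have "\<dots> \<le> (x-1) * (x * (x-1)^(n-1))" using step.IH by simp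
  also have "\<dots> = x * (x-1)^(Suc n - 1)" using step(1)
    by (cases n) (auto simp: algebra_simps)
  finally show ?case .
qed

lemma s_upper:
  assumes x: "x \<ge> 3"
  shows "s_sf x \<le> ln (real x - 1)"
proof -
  have pos: "real (omega_sf n x) \<ge> 1" for n using omega_pos[OF x, of n] by simp
  have R: "(\<lambda>n. ln (real x) / real n + ln (real x - 1) - ln (real x - 1) / real n)
      \<longlonglongrightarrow> 0 + ln (real x - 1) - 0"
    by (intro tendsto_intros)
  have ineq: "ln (real (omega_sf n x)) / real n \<le> ln (real x) / real n + ln (real x - 1) - ln (real x - 1) / real n"
    if n: "n \<ge> 1" for n
  proof -
    have "omega_sf n x \<le> x * (x-1)^(n-1)" using omega_upper[of x n] x n by simp
    hence "real (omega_sf n x) \<le> real (x * (x-1)^(n-1))" by (simp only: of_nat_le_iff)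
    also have "\<dots> = real x * (real x - 1)^(n-1)" using x by (simp add: of_nat_diff)
    finally have "real (omega_sf n x) \<le> real x * (real x - 1)^(n-1)" .
    hence "ln (real (omega_sf n x)) \<le> ln (real x * (real x - 1)^(n-1))"
      using pos[of n] by (subst ln_le_cancel_iff) auto
    also have "\<dots> = ln (real x) + real (n-1) * ln (real x - 1)"
      using x by (simp add: ln_mult ln_realpow)
    also have "\<dots> = ln (real x) + (real n - 1) * ln (real x - 1)" using n by (simp add: of_nat_diff)
    finally have "ln (real (omega_sf n x)) / real n \<le> (ln (real x) + (real n - 1) * ln (real x - 1)) / real n"
      using n by (intro divide_right_mono) auto
    also have "\<dots> = ln (real x) / real n + ln (real x - 1) - ln (real x - 1) / real n"
      using n by (simp add: field_simps)
    finally show ?thesis .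
  qed
  have "s_sf x \<le> 0 + ln (real x - 1) - 0"
    by (rule LIMSEQ_le[OF s_conv[OF x] R]) (use ineq in auto)
  thus ?thesis by simp
qed

theorem theorem2:
  fixes x :: nat
  assumes "x > 3"
  shows "s_sf 3 + ln 2 * (\<Sum>k=3..x-1. 1 / real k) \<le> s_sf x \<and> s_sf x \<le> ln (real x - 1)"
proof
  define m where "m = x - 3"
  have xm: "x = 3 + m" using assms m_def by simp
  have "{3..x-1} = {3..<3+m}" using xm by auto
  thus "s_sf 3 + ln 2 * (\<Sum>k=3..x-1. 1 / real k) \<le> s_sf x" using s_lower[of m] xm by simp
  show "s_sf x \<le> ln (real x - 1)" using s_upper assms by simp
qed

end
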